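(* Let $K$ be a field, $m\ge2$, $d_1,\ldots,d_m$ positive integers, and $b_i=\prod_{j\ne i}d_j$ for $1\le i\le m$. Let $I_{\mathcal{A}}\subset K[x_1,\ldots,x_m,y_1,\ldots,y_m]$ be the kernel of the $K$-algebra homomorphism $\phi$ to $K[t_1,\ldots,t_{m+1}]$ given by $\phi(x_i)=t_1^{b_i}t_{i+1}$ and $\phi(y_i)=t_{i+1}$ for $1\le i\le m$. Then $\mathrm{bar}(I_{\mathcal{A}})\ge\frac{m(m-1)}{2}$.
   Context: $\mathcal{A}$ is the set of columns of the $(m+1)\times 2m$ matrix $\begin{pmatrix} b_1\ \cdots\ b_m & 0\ \cdots\ 0\\ I_m & I_m\end{pmatrix}$ (Lawrence lifting of $(b_1,\ldots,b_m)$). $\mathrm{bar}(I)$ is the least $s$ such that there are binomials $B_1,\ldots,B_s\in I$ with $\mathrm{rad}(I)=\mathrm{rad}(B_1,\ldots,B_s)$. *)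

theory Defs
  imports "HOL-Library.Poly_Mapping" "HOL-Library.Extended_Nat"
begin

type_synonym 'a mpoly = "(nat \<Rightarrow>\<^sub>0 nat) \<Rightarrow>\<^sub>0 'a"

definition Var :: "nat \<Rightarrow> 'a::comm_ring_1 mpoly" where
  "Var v = Poly_Mapping.single (Poly_Mapping.single v 1) 1"

definition Const :: "'a::comm_ring_1 \<Rightarrow> 'a mpoly" where
  "Const c = Poly_Mapping.single 0 c"

definition vars :: "'a::comm_ring_1 mpoly \<Rightarrow> nat set" where
  "vars p = \<Union> (Poly_Mapping.keys ` Poly_Mapping.keys p)"

definition poly_ring :: "nat set \<Rightarrow> 'a::comm_ring_1 mpoly set" where
  "poly_ring V = {p. vars p \<subseteq> V}"

definition subst :: "(nat \<Rightarrow> 'a::comm_ring_1 mpoly) \<Rightarrow> 'a mpoly \<Rightarrow> 'a mpoly" where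
  "subst \<sigma> p = (\<Sum>a\<in>Poly_Mapping.keys p. Const (Poly_Mapping.lookup p a) * (\<Prod>v\<in>Poly_Mapping.keys a. \<sigma> v ^ Poly_Mapping.lookup a v))"

definition ideal_gen :: "'a::comm_ring_1 mpoly set \<Rightarrow> 'a mpoly list \<Rightarrow> 'a mpoly set" where
  "ideal_gen R Bs = {(\<Sum>j<length Bs. r j * Bs ! j) | r. \<forall>j<length Bs. r j \<in> R}"

definition rad :: "'a::comm_ring_1 mpoly set \<Rightarrow> 'a mpoly set \<Rightarrow> 'a mpoly set" where
  "rad R J = {f \<in> R. \<exists>n. f ^ n \<in> J}"

definition is_binomial :: "'a::comm_ring_1 mpoly \<Rightarrow> bool" where
  "is_binomial p \<longleftrightarrow> card (Poly_Mapping.keys p) \<le> 2"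

text \<open>Binomial arithmetical rank of the ideal I of R (infinity if no such binomials exist).\<close>
definition bar :: "'a::comm_ring_1 mpoly set \<Rightarrow> 'a mpoly set \<Rightarrow> enat" where
  "bar R I = Inf {enat (length Bs) | Bs. set Bs \<subseteq> I \<and> (\<forall>B\<in>set Bs. is_binomial B)
                    \<and> rad R I = rad R (ideal_gen R Bs)}"

definition bexp :: "nat \<Rightarrow> (nat \<Rightarrow> nat) \<Rightarrow> nat \<Rightarrow> nat" where
  "bexp m d i = (\<Prod>j\<in>{1..m} - {i}. d j)"

text \<open>Variables: x_i = variable i, y_i = variable (m+i) for 1 <= i <= m;
  target variables t_j = variable j for 1 <= j <= m+1.
  phi(x_i) = t_1^(b_i) t_(i+1), phi(y_i) = t_(i+1).\<close>
definition lawrence_img :: "nat \<Rightarrow> (nat \<Rightarrow> nat) \<Rightarrow> nat \<Rightarrow> 'a::comm_ring_1 mpoly" where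
  "lawrence_img m d v =
     (if v \<in> {1..m} then Var 1 ^ bexp m d v * Var (v + 1)
      else if v \<in> {m+1..2*m} then Var (v - m + 1)
      else 0)"

definition toric_ideal :: "nat \<Rightarrow> (nat \<Rightarrow> nat) \<Rightarrow> 'a::field mpoly set" where
  "toric_ideal m d = {f \<in> poly_ring {1..2*m}. subst (lawrence_img m d) f = 0}"

end

theory Submission imports Defs begin

definition mon :: "(nat \<Rightarrow> 'b::comm_monoid_mult) \<Rightarrow> (nat \<Rightarrow>\<^sub>0 nat) \<Rightarrow> 'b" where
  "mon \<sigma> a = (\<Prod>v\<in>Poly_Mapping.keys a. \<sigma> v ^ Poly_Mapping.lookup a v)"

definition gev :: "('a::comm_ring_1 \<Rightarrow> 'b::comm_ring_1) \<Rightarrow> (nat \<Rightarrow> 'b) \<Rightarrow> 'a mpoly \<Rightarrow> 'b" where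
  "gev h \<sigma> f = (\<Sum>a\<in>Poly_Mapping.keys f. h (Poly_Mapping.lookup f a) * mon \<sigma> a)"

lemma mon_superset:
  assumes "finite S" "Poly_Mapping.keys a \<subseteq> S"
  shows "mon \<sigma> a = (\<Prod>v\<in>S. \<sigma> v ^ Poly_Mapping.lookup a v)"
  unfolding mon_def
  by (rule prod.mono_neutral_left) (use assms in \<open>auto simp: in_keys_iff\<close>)

lemma mon_add: "mon \<sigma> (a + b) = mon \<sigma> a * mon \<sigma> b"
proof -
  let ?S = "Poly_Mapping.keys a \<union> Poly_Mapping.keys b"
  have "mon \<sigma> (a + b) = (\<Prod>v\<in>?S. \<sigma> v ^ Poly_Mapping.lookup (a+b) v)"
    by (rule mon_superset) (auto simp: keys_add)
  also have "\<dots> = (\<Prod>v\<in>?S. \<sigma> v ^ Poly_Mapping.lookup a v) * (\<Prod>v\<in>?S. \<sigma> v ^ Poly_Mapping.lookup b v)"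
    by (simp add: lookup_add power_add prod.distrib)
  also have "\<dots> = mon \<sigma> a * mon \<sigma> b"
    by (subst (1 2) mon_superset[of ?S]) auto
  finally show ?thesis .
qed

lemma mon_zero [simp]: "mon \<sigma> 0 = 1"
  by (simp add: mon_def)

lemma gev_superset:
  assumes "finite S" "Poly_Mapping.keys f \<subseteq> S" "h 0 = 0"
  shows "gev h \<sigma> f = (\<Sum>a\<in>S. h (Poly_Mapping.lookup f a) * mon \<sigma> a)"
  unfolding gev_def
  by (rule sum.mono_neutral_left) (use assms in \<open>auto simp: in_keys_iff\<close>)

locale rhom =
  fixes h :: "'a::comm_ring_1 \<Rightarrow> 'b::comm_ring_1"
  assumes h0: "h 0 = 0" and hadd: "\<And>x y. h (x + y) = h x + h y"
    and hmul: "\<And>x y. h (x * y) = h x * h y" and h1: "h 1 = 1"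
begin

lemma gev_add: "gev h \<sigma> (f + g) = gev h \<sigma> f + gev h \<sigma> g"
proof -
  let ?S = "Poly_Mapping.keys f \<union> Poly_Mapping.keys g"
  have "gev h \<sigma> (f + g) = (\<Sum>a\<in>?S. h (Poly_Mapping.lookup (f+g) a) * mon \<sigma> a)"
    by (rule gev_superset) (auto simp: keys_add h0)
  also have "\<dots> = (\<Sum>a\<in>?S. h (Poly_Mapping.lookup f a) * mon \<sigma> a) + (\<Sum>a\<in>?S. h (Poly_Mapping.lookup g a) * mon \<sigma> a)"
    by (simp add: lookup_add hadd distrib_right sum.distrib)
  also have "\<dots> = gev h \<sigma> f + gev h \<sigma> g"
    by (subst (1 2) gev_superset[of ?S]) (auto simp: h0)
  finally show ?thesis .
qed

lemma gev_zero [simp]: "gev h \<sigma> 0 = 0"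
  by (simp add: gev_def)

lemma gev_single: "gev h \<sigma> (Poly_Mapping.single a c) = h c * mon \<sigma> a"
  by (cases "c = 0") (simp_all add: gev_def h0)

lemma gev_sum: "gev h \<sigma> (sum F S) = (\<Sum>s\<in>S. gev h \<sigma> (F s))"
  by (induction S rule: infinite_finite_induct) (simp_all add: gev_add)

lemma poly_expand: "f = (\<Sum>a\<in>Poly_Mapping.keys f. Poly_Mapping.single a (Poly_Mapping.lookup f a))"
  by (rule poly_mapping_eqI) (simp add: lookup_sum lookup_single when_def in_keys_iff sum.delta' cong: if_cong)

lemma gev_mult: "gev h \<sigma> (f * g) = gev h \<sigma> f * gev h \<sigma> g"
proof -
  have "f * g = (\<Sum>a\<in>Poly_Mapping.keys f. \<Sum>b\<in>Poly_Mapping.keys g.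
      Poly_Mapping.single (a + b) (Poly_Mapping.lookup f a * Poly_Mapping.lookup g b))"
    by (subst (1) poly_expand, subst (2) poly_expand) (simp add: sum_product mult_single)
  then have "gev h \<sigma> (f * g) = (\<Sum>a\<in>Poly_Mapping.keys f. \<Sum>b\<in>Poly_Mapping.keys g.
      (h (Poly_Mapping.lookup f a) * mon \<sigma> a) * (h (Poly_Mapping.lookup g b) * mon \<sigma> b))"
    by (simp add: gev_sum gev_single hmul mon_add mult_ac)
  also have "\<dots> = gev h \<sigma> f * gev h \<sigma> g"
    by (simp add: gev_def sum_product)
  finally show ?thesis .
qed

lemma gev_one [simp]: "gev h \<sigma> 1 = 1"
  using gev_single[of \<sigma> 0 1] by (simp add: h1)

lemma gev_pow: "gev h \<sigma> (f ^ n) = gev h \<sigma> f ^ n"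
  by (induction n) (simp_all add: gev_mult)

lemma gev_uminus: "gev h \<sigma> (- f) = - gev h \<sigma> f"
  using gev_add[of \<sigma> f "-f"] by (simp add: eq_neg_iff_add_eq_0 add.commute)

lemma gev_diff: "gev h \<sigma> (f - g) = gev h \<sigma> f - gev h \<sigma> g"
  using gev_add[of \<sigma> f "-g"] by (simp add: gev_uminus)

end

lemma Const_hom: "rhom (Const :: 'a::comm_ring_1 \<Rightarrow> 'a mpoly)"
  by unfold_locales (simp_all add: Const_def single_add mult_single)

lemma id_hom: "rhom (\<lambda>x::'a::comm_ring_1. x)"
  by unfold_locales simp_all

lemma subst_gev: "subst \<sigma> f = gev Const \<sigma> f"
  by (simp add: subst_def gev_def mon_def)


definition ev :: "nat \<Rightarrow> (nat \<Rightarrow> nat) \<Rightarrow> nat \<Rightarrow> (nat \<Rightarrow>\<^sub>0 nat)" where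
  "ev m d v = (if v \<in> {1..m} then Poly_Mapping.single 1 (bexp m d v) + Poly_Mapping.single (v+1) 1
               else Poly_Mapping.single (v - m + 1) 1)"

definition pw :: "nat \<Rightarrow> (nat \<Rightarrow>\<^sub>0 nat) \<Rightarrow> (nat \<Rightarrow>\<^sub>0 nat)" where
  "pw n u = (\<Sum>i<n. u)"

definition EE :: "nat \<Rightarrow> (nat \<Rightarrow> nat) \<Rightarrow> (nat \<Rightarrow>\<^sub>0 nat) \<Rightarrow> (nat \<Rightarrow>\<^sub>0 nat)" where
  "EE m d a = (\<Sum>v\<in>Poly_Mapping.keys a. pw (Poly_Mapping.lookup a v) (ev m d v))"

lemma Var_pow: "(Var w :: 'a::comm_ring_1 mpoly) ^ n = Poly_Mapping.single (Poly_Mapping.single w n) 1"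
proof (induction n)
  case 0 then show ?case by simp
next
  case (Suc n)
  then show ?case
    by (simp add: Var_def mult_single single_add[symmetric])
qed

lemma img_single:
  assumes "v \<in> {1..2*m}"
  shows "(lawrence_img m d v :: 'a::comm_ring_1 mpoly) = Poly_Mapping.single (ev m d v) 1"
proof -
  have "(Var 1 :: 'a mpoly) ^ bexp m d v * Var (v+1) = Poly_Mapping.single (ev m d v) 1" if "v \<in> {1..m}"
    unfolding Var_pow using that by (simp add: ev_def Var_def mult_single)
  then show ?thesis using assms
    by (auto simp: lawrence_img_def ev_def Var_def)
qed

lemma pw_Suc: "pw (Suc n) u = u + pw n u"
  unfolding pw_def by (simp only: sum.lessThan_Suc add.commute)

lemma pw_0: "pw 0 u = 0"
  unfolding pw_def by (simp only: lessThan_0 sum.empty)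

lemma single_pow: "(Poly_Mapping.single u (1::'a::comm_ring_1)) ^ n = Poly_Mapping.single (pw n u) 1"
  by (induction n) (simp_all only: pw_0 pw_Suc power_0 power_Suc mult_single single_one mult_1_left)

lemma prod_single:
  "(\<Prod>v\<in>S. Poly_Mapping.single (g v) (1::'a::comm_ring_1)) = Poly_Mapping.single (\<Sum>v\<in>S. g v) 1"
  by (induction S rule: infinite_finite_induct) (simp_all add: mult_single)

lemma mon_img:
  assumes "Poly_Mapping.keys a \<subseteq> {1..2*m}"
  shows "mon (lawrence_img m d :: nat \<Rightarrow> 'a::comm_ring_1 mpoly) a = Poly_Mapping.single (EE m d a) 1"
proof -
  have "mon (lawrence_img m d :: nat \<Rightarrow> 'a mpoly) a
      = (\<Prod>v\<in>Poly_Mapping.keys a. Poly_Mapping.single (pw (Poly_Mapping.lookup a v) (ev m d v)) 1)"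
    unfolding mon_def
    by (rule prod.cong) (use assms in \<open>auto simp: img_single single_pow\<close>)
  then show ?thesis by (simp add: prod_single EE_def)
qed

lemma lookup_pw: "Poly_Mapping.lookup (pw n u) k = n * Poly_Mapping.lookup u k"
  by (simp only: pw_def lookup_sum) simp

lemma lookup_EE:
  assumes "Poly_Mapping.keys a \<subseteq> {1..2*m}"
  shows "Poly_Mapping.lookup (EE m d a) w
     = (\<Sum>v\<in>{1..2*m}. Poly_Mapping.lookup a v * Poly_Mapping.lookup (ev m d v) w)"
  unfolding EE_def lookup_sum lookup_pw
  by (rule sum.mono_neutral_left) (use assms in \<open>auto simp: in_keys_iff\<close>)

lemma lookup_ev:
  "Poly_Mapping.lookup (ev m d v) w =
     (if v \<in> {1..m} then (if w = 1 then bexp m d v else 0) + (if w = v + 1 then 1 else 0)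
      else (if w = v - m + 1 then 1 else 0))"
  by (auto simp: ev_def lookup_add lookup_single when_def)

lemma L1:
  assumes "Poly_Mapping.keys a \<subseteq> {1..2*m}"
  shows "Poly_Mapping.lookup (EE m d a) 1 = (\<Sum>v\<in>{1..m}. Poly_Mapping.lookup a v * bexp m d v)"
proof -
  have "Poly_Mapping.lookup (EE m d a) 1
      = (\<Sum>v\<in>{1..2*m}. if v \<in> {1..m} then Poly_Mapping.lookup a v * bexp m d v else 0)"
    unfolding lookup_EE[OF assms] by (rule sum.cong) (auto simp: lookup_ev)
  also have "\<dots> = (\<Sum>v\<in>{1..m}. Poly_Mapping.lookup a v * bexp m d v)"
    by (subst sum.If_cases) (auto intro: sum.cong)
  finally show ?thesis .
qed

lemma L2:
  assumes "Poly_Mapping.keys a \<subseteq> {1..2*m}" "k \<in> {1..m}"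
  shows "Poly_Mapping.lookup (EE m d a) (k+1) = Poly_Mapping.lookup a k + Poly_Mapping.lookup a (m+k)"
proof -
  have "Poly_Mapping.lookup (EE m d a) (k+1)
      = (\<Sum>v\<in>{1..2*m}. (if v = k then Poly_Mapping.lookup a v else 0) + (if v = m + k then Poly_Mapping.lookup a v else 0))"
    unfolding lookup_EE[OF assms(1)] by (rule sum.cong) (use assms(2) in \<open>auto simp: lookup_ev\<close>)
  also have "\<dots> = Poly_Mapping.lookup a k + Poly_Mapping.lookup a (m+k)"
    using assms(2) by (simp add: sum.distrib)
  finally show ?thesis .
qed

lemma L3:
  assumes "Poly_Mapping.keys a \<subseteq> {1..2*m}" "w = 0 \<or> w > m + 1"
  shows "Poly_Mapping.lookup (EE m d a) w = 0"
  unfolding lookup_EE[OF assms(1)] by (rule sum.neutral) (use assms(2) in \<open>auto simp: lookup_ev\<close>)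


definition pt :: "nat \<Rightarrow> nat \<Rightarrow> nat \<Rightarrow> nat \<Rightarrow> 'a::comm_ring_1" where
  "pt m i j = (\<lambda>v. if v = i \<or> v = m + j then 1 else 0)"

lemma mon_pt: "mon (pt m i j) a = (if Poly_Mapping.keys a \<subseteq> {i, m+j} then 1 else 0)"
proof (cases "Poly_Mapping.keys a \<subseteq> {i, m+j}")
  case True
  then have "mon (pt m i j) a = (\<Prod>v\<in>Poly_Mapping.keys a. 1)"
    unfolding mon_def by (intro prod.cong) (auto simp: pt_def)
  then show ?thesis using True by simp
next
  case False
  then obtain v where v: "v \<in> Poly_Mapping.keys a" "v \<noteq> i" "v \<noteq> m + j" by auto
  then have "pt m i j v ^ Poly_Mapping.lookup a v = (0::'a)"
    by (simp add: pt_def in_keys_iff zero_power)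
  then have "mon (pt m i j) a = (0::'a)"
    unfolding mon_def using v(1) by (intro prod_zero) auto
  then show ?thesis using False by simp
qed

lemma eval_nonzero:
  assumes "gev (\<lambda>x. x) (pt m i j) B \<noteq> (0::'a::comm_ring_1)"
  shows "\<exists>a\<in>Poly_Mapping.keys B. Poly_Mapping.keys a \<subseteq> {i, m+j}"
proof (rule ccontr)
  assume "\<not> ?thesis"
  then have "gev (\<lambda>x. x) (pt m i j) B = (0::'a)"
    unfolding gev_def by (intro sum.neutral) (auto simp: mon_pt)
  with assms show False by simp
qed

definition cA :: "nat \<Rightarrow> (nat \<Rightarrow> nat) \<Rightarrow> nat \<Rightarrow> nat \<Rightarrow> (nat \<Rightarrow>\<^sub>0 nat)" where
  "cA m d i j = Poly_Mapping.single i (d i) + Poly_Mapping.single (m+j) (d j)"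

definition circ :: "nat \<Rightarrow> (nat \<Rightarrow> nat) \<Rightarrow> nat \<Rightarrow> nat \<Rightarrow> 'a::comm_ring_1 mpoly" where
  "circ m d i j = Poly_Mapping.single (cA m d i j) 1 - Poly_Mapping.single (cA m d j i) 1"

lemma lookup_cA: "Poly_Mapping.lookup (cA m d i j) v = (if v = i then d i else 0) + (if v = m + j then d j else 0)"
  by (simp add: cA_def lookup_add lookup_single when_def)

lemma keys_cA: "Poly_Mapping.keys (cA m d i j) \<subseteq> {i, m+j}"
  by (auto simp: in_keys_iff lookup_cA split: if_splits)

lemma bexp_prod:
  assumes "i \<in> {1..m}"
  shows "d i * bexp m d i = prod d {1..m}"
  unfolding bexp_def using assms by (simp add: prod.remove)

lemma EE_cA:
  assumes "i \<in> {1..m}" "j \<in> {1..m}"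
  shows "EE m d (cA m d i j) = EE m d (cA m d j i)"
proof (rule poly_mapping_eqI)
  fix w
  have k1: "Poly_Mapping.keys (cA m d i j) \<subseteq> {1..2*m}" "Poly_Mapping.keys (cA m d j i) \<subseteq> {1..2*m}"
    using keys_cA[of m d i j] keys_cA[of m d j i] assms by auto
  consider "w = 0 \<or> w > m + 1" | "w = 1" | k where "k \<in> {1..m}" "w = k + 1"
  proof -
    have "w = 0 \<or> w > m + 1 \<or> w = 1 \<or> (w - 1 \<in> {1..m} \<and> w = (w - 1) + 1)" by auto
    then show thesis using that by blast
  qed
  then show "Poly_Mapping.lookup (EE m d (cA m d i j)) w = Poly_Mapping.lookup (EE m d (cA m d j i)) w"
  proof cases
    case 1 then show ?thesis using L3[OF k1(1)] L3[OF k1(2)] by simp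
  next
    case 2
    have s: "(\<Sum>v\<in>{1..m}. Poly_Mapping.lookup (cA m d i j) v * bexp m d v) = d i * bexp m d i"
      if "i \<in> {1..m}" "j \<in> {1..m}" for i j
    proof -
      have "(\<Sum>v\<in>{1..m}. Poly_Mapping.lookup (cA m d i j) v * bexp m d v)
          = (\<Sum>v\<in>{1..m}. if v = i then d i * bexp m d i else 0)"
        using that by (intro sum.cong) (auto simp: lookup_cA)
      then show ?thesis using that by simp
    qed
    show ?thesis using 2 L1[OF k1(1)] L1[OF k1(2)] s[OF assms] s[OF assms(2,1)]
      bexp_prod[OF assms(1)] bexp_prod[OF assms(2)] by simp
  next
    case 3
    then show ?thesis using L2[OF k1(1) 3(1)] L2[OF k1(2) 3(1)] assms by (auto simp: lookup_cA)
  qed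
qed

lemma circ_in:
  assumes "i \<in> {1..m}" "j \<in> {1..m}"
  shows "(circ m d i j :: 'a::field mpoly) \<in> toric_ideal m d"
proof -
  interpret C: rhom "Const :: 'a \<Rightarrow> 'a mpoly" by (rule Const_hom)
  have k1: "Poly_Mapping.keys (cA m d i j) \<subseteq> {1..2*m}" "Poly_Mapping.keys (cA m d j i) \<subseteq> {1..2*m}"
    using keys_cA[of m d i j] keys_cA[of m d j i] assms by auto
  have kc: "Poly_Mapping.keys (circ m d i j :: 'a mpoly) \<subseteq> {cA m d i j, cA m d j i}"
    unfolding circ_def using keys_diff by fastforce
  have "vars (circ m d i j :: 'a mpoly) \<subseteq> {1..2*m}"
    unfolding vars_def using kc k1 by blast
  moreover have "subst (lawrence_img m d) (circ m d i j :: 'a mpoly) = 0"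
    unfolding subst_gev circ_def C.gev_diff C.gev_single
    by (simp add: mon_img[OF k1(1)] mon_img[OF k1(2)] EE_cA[OF assms] Const_def)
  ultimately show ?thesis by (simp add: toric_ideal_def poly_ring_def)
qed

lemma circ_eval:
  assumes "i \<in> {1..m}" "j \<in> {1..m}" "i \<noteq> j" "d j > 0"
  shows "gev (\<lambda>x. x) (pt m i j) (circ m d i j :: 'a::comm_ring_1 mpoly) = 1"
proof -
  interpret I: rhom "\<lambda>x::'a. x" by (rule id_hom)
  have "j \<in> Poly_Mapping.keys (cA m d j i)"
    using assms by (simp add: in_keys_iff lookup_cA)
  moreover have "j \<notin> {i, m + j}" using assms by auto
  ultimately have "\<not> Poly_Mapping.keys (cA m d j i) \<subseteq> {i, m+j}" by blast
  then show ?thesis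
    unfolding circ_def I.gev_diff I.gev_single
    by (simp add: mon_pt keys_cA)
qed


lemma bexp_pos:
  assumes "\<forall>i\<in>{1..m}. d i > 0"
  shows "bexp m d v > 0"
  unfolding bexp_def using assms by (intro prod_pos) auto

lemma lookup_out: "Poly_Mapping.keys a \<subseteq> S \<Longrightarrow> v \<notin> S \<Longrightarrow> Poly_Mapping.lookup a v = 0"
  by (meson in_keys_iff subsetD)

lemma F1:
  assumes "Poly_Mapping.keys a \<subseteq> {i, m+j}" "i \<in> {1..m}" "j \<in> {1..m}"
  shows "Poly_Mapping.lookup (EE m d a) 1 = Poly_Mapping.lookup a i * bexp m d i"
proof -
  have k: "Poly_Mapping.keys a \<subseteq> {1..2*m}" using assms by auto
  have "(\<Sum>v\<in>{1..m}. Poly_Mapping.lookup a v * bexp m d v)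
      = (\<Sum>v\<in>{1..m}. if v = i then Poly_Mapping.lookup a i * bexp m d i else 0)"
    using assms lookup_out[OF assms(1)] by (intro sum.cong) auto
  then show ?thesis using L1[OF k] assms(2) by simp
qed

lemma diffkeys:
  assumes a: "Poly_Mapping.keys a \<subseteq> {i, m+j}" and a': "Poly_Mapping.keys a' \<subseteq> {k, m+l}"
    and ij: "1 \<le> i" "i < j" "j \<le> m" and kl: "1 \<le> k" "k < l" "l \<le> m"
    and dpos: "\<forall>i\<in>{1..m}. d i > 0"
    and E: "EE m d a = EE m d a'"
  shows "a = a'"
proof -
  have ka: "Poly_Mapping.keys a \<subseteq> {1..2*m}" and ka': "Poly_Mapping.keys a' \<subseteq> {1..2*m}"
    using a a' ij kl by auto
  have z: "Poly_Mapping.lookup a v = 0" if "v \<noteq> i" "v \<noteq> m + j" for v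
    using lookup_out[OF a] that by auto
  have z': "Poly_Mapping.lookup a' v = 0" if "v \<noteq> k" "v \<noteq> m + l" for v
    using lookup_out[OF a'] that by auto
  have f1: "Poly_Mapping.lookup a i * bexp m d i = Poly_Mapping.lookup a' k * bexp m d k"
    using F1[OF a, where d=d] F1[OF a', where d=d] ij kl E by simp
  have f2: "Poly_Mapping.lookup a t + Poly_Mapping.lookup a (m+t) = Poly_Mapping.lookup a' t + Poly_Mapping.lookup a' (m+t)"
    if "t \<in> {1..m}" for t
    using L2[OF ka that, where d=d] L2[OF ka' that, where d=d] E by simp
  have bi: "bexp m d i > 0" "bexp m d k > 0" using bexp_pos[OF dpos] by auto
  have fi: "Poly_Mapping.lookup a i = Poly_Mapping.lookup a' i + Poly_Mapping.lookup a' (m+i)"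
    using f2[of i] z[of "m+i"] ij by simp
  have fj: "Poly_Mapping.lookup a (m+j) = Poly_Mapping.lookup a' j + Poly_Mapping.lookup a' (m+j)"
    using f2[of j] z[of j] ij by simp
  have fk: "Poly_Mapping.lookup a k + Poly_Mapping.lookup a (m+k) = Poly_Mapping.lookup a' k"
    using f2[of k] z'[of "m+k"] kl by simp
  have fl: "Poly_Mapping.lookup a l + Poly_Mapping.lookup a (m+l) = Poly_Mapping.lookup a' (m+l)"
    using f2[of l] z'[of l] kl by simp
  have main: "Poly_Mapping.lookup a i = Poly_Mapping.lookup a' i \<and> Poly_Mapping.lookup a (m+j) = Poly_Mapping.lookup a' (m+j)
     \<and> Poly_Mapping.lookup a k = Poly_Mapping.lookup a' k \<and> Poly_Mapping.lookup a (m+l) = Poly_Mapping.lookup a' (m+l)"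
  proof (cases "i = k")
    case True
    show ?thesis
    proof (cases "j = l")
      case True
      with \<open>i = k\<close> fi fj z'[of "m+i"] z'[of j] ij show ?thesis by auto
    next
      case False
      with \<open>i = k\<close> fi fj fl z'[of "m+i"] z'[of j] z[of l] z[of "m+l"] ij kl show ?thesis by auto
    qed
  next
    case False
    show ?thesis
    proof (cases "j = k")
      case True
      then have "l \<noteq> i" using ij kl by auto
      have "Poly_Mapping.lookup a i = 0" using fi z'[of i] z'[of "m+i"] \<open>l \<noteq> i\<close> \<open>i \<noteq> k\<close> ij kl by auto
      then have "Poly_Mapping.lookup a' k = 0" using f1 bi by simp
      then show ?thesis using \<open>Poly_Mapping.lookup a i = 0\<close> fj fk fl True z[of l] z[of "m+l"] z[of k] z'[of i] z'[of "m+i"] z'[of "m+j"]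
          \<open>l \<noteq> i\<close> \<open>i \<noteq> k\<close> ij kl by auto
    next
      case False
      have "Poly_Mapping.lookup a' k = 0" using fk z[of k] z[of "m+k"] \<open>i \<noteq> k\<close> False ij kl by auto
      then have "Poly_Mapping.lookup a i = 0" using f1 bi by simp
      then show ?thesis using \<open>Poly_Mapping.lookup a' k = 0\<close> fi fj fl z[of k] z[of l] z[of "m+l"] z'[of i] z'[of "m+i"] z'[of j] z'[of "m+j"]
          \<open>i \<noteq> k\<close> False ij kl by (cases "j = l") auto
    qed
  qed
  show ?thesis
  proof (rule poly_mapping_eqI)
    fix v
    show "Poly_Mapping.lookup a v = Poly_Mapping.lookup a' v"
      using main z[of v] z'[of v] by (cases "v = i \<or> v = m + j \<or> v = k \<or> v = m + l") auto
  qed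
qed


lemma samekey:
  assumes w1: "Poly_Mapping.keys w \<subseteq> {i, m+j}" and w2: "Poly_Mapping.keys w \<subseteq> {k, m+l}"
    and ij: "1 \<le> i" "i < j" "j \<le> m" and kl: "1 \<le> k" "k < l" "l \<le> m"
    and ne: "(i, j) \<noteq> (k, l)"
    and a: "Poly_Mapping.keys a \<subseteq> {1..2*m}"
    and dpos: "\<forall>i\<in>{1..m}. d i > 0"
    and E: "EE m d a = EE m d w"
  shows "a = w"
proof -
  have kw: "Poly_Mapping.keys w \<subseteq> {1..2*m}" using w1 ij by auto
  have z1: "Poly_Mapping.lookup w v = 0" if "v \<noteq> i" "v \<noteq> m + j" for v
    using lookup_out[OF w1] that by auto
  have z2: "Poly_Mapping.lookup w v = 0" if "v \<noteq> k" "v \<noteq> m + l" for v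
    using lookup_out[OF w2] that by auto
  have f2: "Poly_Mapping.lookup a t + Poly_Mapping.lookup a (m+t) = Poly_Mapping.lookup w t + Poly_Mapping.lookup w (m+t)"
    if "t \<in> {1..m}" for t
    using L2[OF a that, where d=d] L2[OF kw that, where d=d] E by simp
  have f1: "(\<Sum>v\<in>{1..m}. Poly_Mapping.lookup a v * bexp m d v) = Poly_Mapping.lookup w i * bexp m d i"
    using L1[OF a, where d=d] F1[OF w1, where d=d] ij E by simp
  have bpos: "bexp m d v > 0" for v using bexp_pos[OF dpos] .
  have low: "Poly_Mapping.lookup a v = Poly_Mapping.lookup w v" if "v \<in> {1..m}" for v
  proof (cases "i = k")
    case True
    then have "j \<noteq> l" using ne by auto
    then have wz: "Poly_Mapping.lookup w v = 0" if "v \<noteq> i" for v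
      using z1[of v] z2[of v] that True by (cases "v = m + j") auto
    have az: "Poly_Mapping.lookup a t = 0" if "t \<in> {1..m}" "t \<noteq> i" for t
      using f2[OF that(1)] wz[of t] wz[of "m+t"] that ij by auto
    have "(\<Sum>v\<in>{1..m}. Poly_Mapping.lookup a v * bexp m d v)
        = (\<Sum>v\<in>{1..m}. if v = i then Poly_Mapping.lookup a i * bexp m d i else 0)"
      using az by (intro sum.cong) auto
    then have "Poly_Mapping.lookup a i * bexp m d i = Poly_Mapping.lookup w i * bexp m d i"
      using f1 ij by simp
    then have "Poly_Mapping.lookup a i = Poly_Mapping.lookup w i" using bpos[of i] by simp
    then show ?thesis using az[of v] wz[of v] that by (cases "v = i") auto
  next
    case False
    then have "Poly_Mapping.lookup w i = 0" using z2[of i] ij kl by auto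
    then have "(\<Sum>v\<in>{1..m}. Poly_Mapping.lookup a v * bexp m d v) = 0" using f1 by simp
    then have "Poly_Mapping.lookup a v * bexp m d v = 0" using that by simp
    then have "Poly_Mapping.lookup a v = 0" using bpos[of v] by simp
    moreover have "Poly_Mapping.lookup w v = 0"
      using z1[of v] that ij \<open>Poly_Mapping.lookup w i = 0\<close> by (cases "v = i") auto
    ultimately show ?thesis by simp
  qed
  show ?thesis
  proof (rule poly_mapping_eqI)
    fix v
    show "Poly_Mapping.lookup a v = Poly_Mapping.lookup w v"
    proof (cases "v \<in> {1..m}")
      case True then show ?thesis using low by simp
    next
      case False
      show ?thesis
      proof (cases "v \<in> {m+1..2*m}")
        case True
        then have t: "v - m \<in> {1..m}" "v = m + (v - m)" by auto
        show ?thesis using f2[OF t(1)] low[OF t(1)] t(2) by simp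
      next
        case False
        then have "v \<notin> {1..2*m}" using \<open>v \<notin> {1..m}\<close> by auto
        then show ?thesis using lookup_out[OF a] lookup_out[OF kw] by simp
      qed
    qed
  qed
qed

lemma keys_in_ring:
  assumes "B \<in> poly_ring S" "c \<in> Poly_Mapping.keys B"
  shows "Poly_Mapping.keys c \<subseteq> S"
  using assms by (auto simp: poly_ring_def vars_def)

lemma partner:
  assumes B: "(B :: 'a::field mpoly) \<in> toric_ideal m d" and a: "a \<in> Poly_Mapping.keys B"
  shows "\<exists>a'\<in>Poly_Mapping.keys B. a' \<noteq> a \<and> EE m d a' = EE m d a"
proof (rule ccontr)
  assume na: "\<not> ?thesis"
  have R: "B \<in> poly_ring {1..2*m}" and S0: "subst (lawrence_img m d) B = 0"
    using B by (auto simp: toric_ideal_def)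
  have "subst (lawrence_img m d) B = (\<Sum>c\<in>Poly_Mapping.keys B. Poly_Mapping.single (EE m d c) (Poly_Mapping.lookup B c))"
    unfolding subst_gev gev_def
    by (intro sum.cong) (auto simp: mon_img[OF keys_in_ring[OF R]] Const_def mult_single)
  then have "Poly_Mapping.lookup (subst (lawrence_img m d) B) (EE m d a)
      = (\<Sum>c\<in>Poly_Mapping.keys B. if EE m d c = EE m d a then Poly_Mapping.lookup B c else 0)"
    by (simp add: lookup_sum lookup_single when_def)
  also have "\<dots> = (\<Sum>c\<in>Poly_Mapping.keys B. if c = a then Poly_Mapping.lookup B a else 0)"
    using na a by (intro sum.cong) auto
  also have "\<dots> = Poly_Mapping.lookup B a" using a by simp
  finally show False using S0 a by (simp add: in_keys_iff)
qed

lemma binom_inj: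
  assumes B: "(B :: 'a::field mpoly) \<in> toric_ideal m d" and card: "card (Poly_Mapping.keys B) \<le> 2"
    and e1: "gev (\<lambda>x. x) (pt m i j) B \<noteq> (0::'a)" and e2: "gev (\<lambda>x. x) (pt m k l) B \<noteq> (0::'a)"
    and ij: "1 \<le> i" "i < j" "j \<le> m" and kl: "1 \<le> k" "k < l" "l \<le> m"
    and dpos: "\<forall>i\<in>{1..m}. d i > 0"
  shows "(i, j) = (k, l)"
proof (rule ccontr)
  assume ne: "(i, j) \<noteq> (k, l)"
  have R: "B \<in> poly_ring {1..2*m}" using B by (auto simp: toric_ideal_def)
  obtain w1 where w1: "w1 \<in> Poly_Mapping.keys B" "Poly_Mapping.keys w1 \<subseteq> {i, m+j}"
    using eval_nonzero[OF e1] by blast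
  obtain w2 where w2: "w2 \<in> Poly_Mapping.keys B" "Poly_Mapping.keys w2 \<subseteq> {k, m+l}"
    using eval_nonzero[OF e2] by blast
  obtain a' where a': "a' \<in> Poly_Mapping.keys B" "a' \<noteq> w1" "EE m d a' = EE m d w1"
    using partner[OF B w1(1)] by blast
  show False
  proof (cases "w1 = w2")
    case True
    have "a' = w1"
      by (rule samekey[OF w1(2) _ ij kl ne keys_in_ring[OF R a'(1)] dpos a'(3)]) (use w2 True in simp)
    with a' show False by simp
  next
    case False
    have "a' = w2"
    proof (rule ccontr)
      assume "a' \<noteq> w2"
      then have "{w1, w2, a'} \<subseteq> Poly_Mapping.keys B" "card {w1, w2, a'} = 3"
        using False a' w1 w2 by auto
      then have "3 \<le> card (Poly_Mapping.keys B)"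
        by (metis card_mono finite_keys)
      with card show False by simp
    qed
    then have "w1 = w2"
      using diffkeys[OF w1(2) w2(2) ij kl dpos] a'(3) by simp
    with False show False by simp
  qed
qed

lemma card_pairs: "card {(i, j). 1 \<le> i \<and> i < j \<and> j \<le> (m::nat)} * 2 = m * (m - 1)"
proof (induction m)
  case 0
  have e: "{(i, j). 1 \<le> i \<and> i < j \<and> j \<le> (0::nat)} = {}" by auto
  show ?case unfolding e by simp
next
  case (Suc m)
  have eq: "{(i, j). 1 \<le> i \<and> i < j \<and> j \<le> Suc m} = {(i, j). 1 \<le> i \<and> i < j \<and> j \<le> m} \<union> (\<lambda>i. (i, Suc m)) ` {1..m}"
    by auto
  have fin: "finite {(i, j). 1 \<le> i \<and> i < j \<and> j \<le> (m::nat)}"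
    by (rule finite_subset[of _ "{1..m} \<times> {1..m}"]) auto
  have "card {(i, j). 1 \<le> i \<and> i < j \<and> j \<le> Suc m} = card {(i, j). 1 \<le> i \<and> i < j \<and> j \<le> m} + m"
    unfolding eq by (subst card_Un_disjoint[OF fin]) (auto simp: card_image inj_on_def)
  then show ?case using Suc.IH by (cases m) (auto simp: algebra_simps)
qed


theorem theorem4p10:
  fixes m :: nat and d :: "nat \<Rightarrow> nat"
  assumes "m \<ge> 2" and "\<forall>i\<in>{1..m}. d i > 0"
  shows "enat (m * (m - 1) div 2)
           \<le> bar (poly_ring {1..2*m} :: 'a::field mpoly set) (toric_ideal m d :: 'a mpoly set)"
proof -
  note dpos = assms(2)
  interpret I: rhom "\<lambda>x::'a. x" by (rule id_hom)
  let ?R = "poly_ring {1..2*m} :: 'a mpoly set"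
  let ?I = "toric_ideal m d :: 'a mpoly set"
  let ?P = "{(i, j). 1 \<le> i \<and> i < j \<and> j \<le> m}"
  have cardP: "m * (m - 1) div 2 = card ?P" using card_pairs[of m] by simp
  have finP: "finite ?P"
    by (rule finite_subset[of _ "{1..m} \<times> {1..m}"]) auto
  show ?thesis
    unfolding bar_def
  proof (rule Inf_greatest)
    fix x assume "x \<in> {enat (length Bs) | Bs. set Bs \<subseteq> ?I \<and> (\<forall>B\<in>set Bs. is_binomial B)
                    \<and> rad ?R ?I = rad ?R (ideal_gen ?R Bs)}"
    then obtain Bs where x: "x = enat (length Bs)" and sub: "set Bs \<subseteq> ?I"
      and bin: "\<forall>B\<in>set Bs. is_binomial B" and rad: "rad ?R ?I = rad ?R (ideal_gen ?R Bs)"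
      by blast
    have ex: "\<exists>t<length Bs. gev (\<lambda>x. x) (pt m i j) (Bs ! t) \<noteq> (0::'a)"
      if ij: "1 \<le> i" "i < j" "j \<le> m" for i j
    proof (rule ccontr)
      assume none: "\<not> ?thesis"
      have cI: "(circ m d i j :: 'a mpoly) \<in> ?I" by (rule circ_in) (use ij in auto)
      then have "circ m d i j \<in> rad ?R ?I"
        by (auto simp: rad_def toric_ideal_def intro: exI[of _ 1])
      then obtain n where "(circ m d i j :: 'a mpoly) ^ n \<in> ideal_gen ?R Bs"
        using rad by (auto simp: rad_def)
      then obtain r where r: "(circ m d i j :: 'a mpoly) ^ n = (\<Sum>t<length Bs. r t * Bs ! t)"
        by (auto simp: ideal_gen_def)
      have "gev (\<lambda>x. x) (pt m i j) ((circ m d i j :: 'a mpoly) ^ n) = 1"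
      proof -
        have "gev (\<lambda>x. x) (pt m i j) (circ m d i j :: 'a mpoly) = (1::'a)"
          by (rule circ_eval) (use ij dpos in auto)
        then show ?thesis by (simp add: I.gev_pow)
      qed
      moreover have "gev (\<lambda>x. x) (pt m i j) (\<Sum>t<length Bs. r t * Bs ! t) = (0::'a)"
        using none by (simp add: I.gev_sum I.gev_mult)
      ultimately show False using r by simp
    qed
    define g where "g p = (SOME t. t < length Bs \<and> gev (\<lambda>x. x) (pt m (fst p) (snd p)) (Bs ! t) \<noteq> (0::'a))" for p
    have g: "g p < length Bs \<and> gev (\<lambda>x. x) (pt m (fst p) (snd p)) (Bs ! g p) \<noteq> (0::'a)" if "p \<in> ?P" for p
      unfolding g_def by (rule someI_ex) (use ex that in auto)
    have "inj_on g ?P"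
    proof (rule inj_onI)
      fix p q assume p: "p \<in> ?P" and q: "q \<in> ?P" and e: "g p = g q"
      obtain i j where pij: "p = (i, j)" by (cases p)
      obtain k l where qkl: "q = (k, l)" by (cases q)
      have B: "Bs ! g p \<in> set Bs" using g[OF p] by simp
      then have BI: "Bs ! g p \<in> ?I" and Bb: "card (Poly_Mapping.keys (Bs ! g p)) \<le> 2"
        using sub bin by (auto simp: is_binomial_def)
      show "p = q"
        using binom_inj[OF BI Bb, of i j k l] g[OF p] g[OF q] e p q dpos pij qkl by auto
    qed
    moreover have "g ` ?P \<subseteq> {..<length Bs}" using g by auto
    ultimately have "card ?P \<le> card {..<length Bs}"
      by (intro card_inj_on_le) auto
    then show "enat (m * (m - 1) div 2) \<le> x" using x cardP by simp
  qed
qed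

end
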